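(* Let $p\in\mathbb{C}[x,y]$ be a primitive polynomial whose zero locus $p^{-1}(0)$ is isomorphic to $\mathbb{C}$, let $\alpha$ be a polynomial automorphism of $\mathbb{C}^2$ and $q=p\circ\alpha$, and assume that either $q$ is linear or, for some relatively prime integers $k,l\ge2$ and some $n\ge1$, the leading quasi-homogeneous part of $q$ with respect to the weighted degree function determined by $(k,l)$ is $(x^k+y^l)^n$. Let $\pi:\mathbb{C}^2\to\mathbb{C}$, $(x,y)\mapsto x$, let $\Delta_r=\{x\in\mathbb{C}:|x|<r\}$ with closure $\bar\Delta_r$, and let $\delta>0$ and $r>0$ be such that $\pi$ maps $\{(x,y) : \frac{\partial q}{\partial y}(x,y)=0,\ |q(x,y)|<\delta\}$ into $\Delta_r$. Then for every $c\in\mathbb{C}$ with $0<|c|<\delta$, the set $\Gamma_c\cap\pi^{-1}(\mathbb{C}\setminus\bar\Delta_r)$, where $\Gamma_c=q^{-1}(c)$, is a disjoint union of components each biholomorphic to a punctured disc.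
   Context: A polynomial $p\in\mathbb{C}[x,y]$ is primitive if it cannot be written as $f\circ g$ with $g\in\mathbb{C}[x,y]$ and $f\in\mathbb{C}[t]$ of degree at least $2$. For a pair $(k,l)$ of relatively prime natural numbers, the weighted degree function $d$ is defined on nonzero $r(x,y)=\sum_{i,j}a_{ij}x^iy^j$ by $d(r)=\max_{(i,j)\in I}(li+kj)$, where $I=\{(i,j)\in\mathbb{Z}_{\ge0}^2 : a_{ij}\neq 0\}$; with $\hat I=\{(i,j)\in I : li+kj=d(r)\}$, the leading quasi-homogeneous part of $r$ is $\hat r(x,y)=\sum_{(i,j)\in\hat I}a_{ij}x^iy^j$. *)

theory Defs
  imports "HOL-Complex_Analysis.Complex_Analysis" "HOL-Computational_Algebra.Polynomial"
begin

text \<open>Bivariate polynomials in C[x,y] are represented as complex poly poly: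
  the outer variable is y, the coefficients are polynomials in x.
  The coefficient a_ij of x^i y^j of r is coeff (coeff r j) i.\<close>

type_synonym bpoly = "complex poly poly"

definition beval :: "bpoly \<Rightarrow> complex \<Rightarrow> complex \<Rightarrow> complex" where
  "beval r x y = poly (poly r [:y:]) x"

definition bcoeff :: "bpoly \<Rightarrow> nat \<Rightarrow> nat \<Rightarrow> complex" where
  "bcoeff r i j = coeff (coeff r j) i"

definition bX :: bpoly where "bX = [:[:0, 1:]:]"
definition bY :: bpoly where "bY = [:0, 1:]"

definition bconst :: "complex \<Rightarrow> bpoly" where "bconst c = [:[:c:]:]"

definition ucomp :: "complex poly \<Rightarrow> bpoly \<Rightarrow> bpoly" where
  "ucomp f g = poly (map_poly bconst f) g"

definition primitive :: "bpoly \<Rightarrow> bool" where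
  "primitive p \<longleftrightarrow> \<not> (\<exists>f g. degree f \<ge> 2 \<and> p = ucomp f g)"

definition zero_locus_iso_C :: "bpoly \<Rightarrow> bool" where
  "zero_locus_iso_C p \<longleftrightarrow>
     (\<exists>\<phi>1 \<phi>2 :: complex poly. \<exists>\<psi> :: bpoly.
        (\<lambda>t. (poly \<phi>1 t, poly \<phi>2 t)) ` UNIV = {(x, y). beval p x y = 0} \<and>
        (\<forall>t. beval \<psi> (poly \<phi>1 t) (poly \<phi>2 t) = t) \<and>
        (\<forall>x y. beval p x y = 0 \<longrightarrow>
            poly \<phi>1 (beval \<psi> x y) = x \<and> poly \<phi>2 (beval \<psi> x y) = y))"

definition bmap :: "bpoly \<times> bpoly \<Rightarrow> complex \<times> complex \<Rightarrow> complex \<times> complex" where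
  "bmap a z = (beval (fst a) (fst z) (snd z), beval (snd a) (fst z) (snd z))"

definition poly_automorphism :: "bpoly \<times> bpoly \<Rightarrow> bool" where
  "poly_automorphism a \<longleftrightarrow>
     (\<exists>b. (\<forall>z. bmap b (bmap a z) = z) \<and> (\<forall>z. bmap a (bmap b z) = z))"

definition blinear :: "bpoly \<Rightarrow> bool" where
  "blinear r \<longleftrightarrow> (\<forall>i j. i + j \<ge> 2 \<longrightarrow> bcoeff r i j = 0)"

definition wdeg :: "nat \<Rightarrow> nat \<Rightarrow> bpoly \<Rightarrow> nat" where
  "wdeg k l r = Max {l * i + k * j | i j. bcoeff r i j \<noteq> 0}"

definition lqh_coeff :: "nat \<Rightarrow> nat \<Rightarrow> bpoly \<Rightarrow> nat \<Rightarrow> nat \<Rightarrow> complex" where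
  "lqh_coeff k l r i j = (if l * i + k * j = wdeg k l r then bcoeff r i j else 0)"

definition lqh_part_is :: "nat \<Rightarrow> nat \<Rightarrow> bpoly \<Rightarrow> bpoly \<Rightarrow> bool" where
  "lqh_part_is k l r s \<longleftrightarrow> (\<forall>i j. lqh_coeff k l r i j = bcoeff s i j)"

text \<open>Biholomorphism from the punctured unit disc onto a set S in C^2
  (S a smooth complex curve): a holomorphic immersion which is a homeomorphism onto S.\<close>
definition biholo_punctured_disc :: "(complex \<times> complex) set \<Rightarrow> bool" where
  "biholo_punctured_disc S \<longleftrightarrow>
     (\<exists>f g. homeomorphism (ball 0 1 - {0}) S f g \<and>
        (\<lambda>z. fst (f z)) holomorphic_on (ball 0 1 - {0}) \<and>
        (\<lambda>z. snd (f z)) holomorphic_on (ball 0 1 - {0}) \<and>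
        (\<forall>z \<in> ball 0 1 - {0}. deriv (\<lambda>w. fst (f w)) z \<noteq> 0 \<or> deriv (\<lambda>w. snd (f w)) z \<noteq> 0))"

end

theory Submission
  imports Defs "HOL-Computational_Algebra.Fundamental_Theorem_Algebra"
begin

definition yp :: "bpoly \<Rightarrow> complex \<Rightarrow> complex poly" where
  "yp Q x = map_poly (\<lambda>c. poly c x) Q"

lemma beval_yp: "beval Q x y = poly (yp Q x) y"
proof (induction Q rule: pCons_induct)
  case 0
  then show ?case by (simp add: beval_def yp_def)
next
  case (pCons a p)
  then show ?case by (simp add: beval_def yp_def map_poly_pCons)
qed

lemma coeff_yp: "coeff (yp Q x) j = poly (coeff Q j) x"
  by (simp add: yp_def coeff_map_poly)

lemma beval_sum: "beval Q x y = (\<Sum>j\<le>degree Q. poly (coeff Q j) x * y ^ j)"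
proof -
  have "poly (yp Q x) y = (\<Sum>j\<le>degree Q. coeff (yp Q x) j * y ^ j)"
  proof -
    have "degree (yp Q x) \<le> degree Q" by (simp add: yp_def map_poly_degree_leq)
    then show ?thesis unfolding poly_altdef
      by (intro sum.mono_neutral_left) (auto simp: coeff_eq_0)
  qed
  thus ?thesis by (simp add: beval_yp coeff_yp)
qed

lemma yp_pderiv: "yp (pderiv Q) x = pderiv (yp Q x)"
  by (rule poly_eqI) (simp add: coeff_yp coeff_pderiv)

lemma beval_diff: "beval (A - B) x y = beval A x y - beval B x y"
  by (simp add: beval_def)
lemma beval_mult: "beval (A * B) x y = beval A x y * beval B x y"
  by (simp add: beval_def)
lemma beval_add: "beval (A + B) x y = beval A x y + beval B x y"
  by (simp add: beval_def)
lemma beval_power: "beval (A ^ n) x y = beval A x y ^ n"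
  by (simp add: beval_def)
lemma beval_bconst[simp]: "beval (bconst c) x y = c"
  by (simp add: beval_def bconst_def)
lemma beval_bX[simp]: "beval bX x y = x"
  by (simp add: beval_def bX_def)
lemma beval_bY[simp]: "beval bY x y = y"
  by (simp add: beval_def bY_def)

locale curve =
  fixes Q :: bpoly and N :: nat and a :: complex and r :: real
  assumes degQ: "degree Q = N" and N1: "N \<ge> 1" and lcQ: "coeff Q N = [:a:]"
    and a0: "a \<noteq> 0" and rpos: "r > 0"
    and simple: "\<And>x y. cmod x > r \<Longrightarrow> beval Q x y = 0 \<Longrightarrow> beval (pderiv Q) x y \<noteq> 0"
begin

lemma coeff_yp_N: "coeff (yp Q x) N = a"
  by (simp add: coeff_yp lcQ)

lemma deg_yp: "degree (yp Q x) = N"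
proof (rule antisym)
  show "degree (yp Q x) \<le> N" using degQ by (metis yp_def map_poly_degree_leq)
  show "N \<le> degree (yp Q x)" using coeff_yp_N a0 by (simp add: le_degree)
qed

lemma lc_yp: "lead_coeff (yp Q x) = a"
  by (simp add: deg_yp coeff_yp_N)

lemma yp_nz: "yp Q x \<noteq> 0"
  using lc_yp[of x] a0 by (metis leading_coeff_0_iff)

lemma factor_bound:
  assumes "\<epsilon> > 0" and far: "\<And>w. beval Q x w = 0 \<Longrightarrow> dist w y \<ge> \<epsilon>"
  shows "cmod (beval Q x y) \<ge> cmod a * \<epsilon> ^ N"
proof -
  obtain root where rt: "smult (lead_coeff (yp Q x)) (\<Prod>i<degree (yp Q x). [:-root i, 1:]) = yp Q x"
    using complex_poly_decompose' by blast
  have ev: "beval Q x w = a * (\<Prod>i<N. (w - root i))" for w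
  proof -
    have "beval Q x w = poly (smult (lead_coeff (yp Q x)) (\<Prod>i<degree (yp Q x). [:-root i, 1:])) w"
      by (simp add: beval_yp rt)
    also have "\<dots> = a * (\<Prod>i<N. (w - root i))"
      by (simp add: lc_yp deg_yp poly_prod coeff_yp_N)
    finally show ?thesis .
  qed
  have "beval Q x (root i) = 0" if "i < N" for i
    using that by (simp add: ev) blast
  then have d: "dist y (root i) \<ge> \<epsilon>" if "i < N" for i
    using far that by (metis dist_commute)
  have "\<epsilon> ^ N = (\<Prod>i<N. \<epsilon>)" by simp
  also have "\<dots> \<le> (\<Prod>i<N. cmod (y - root i))"
    by (rule prod_mono) (use d assms(1) in \<open>auto simp: dist_norm\<close>)
  finally have "\<epsilon> ^ N \<le> cmod (\<Prod>i<N. (y - root i))"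
    by (simp add: prod_norm)
  then show ?thesis
    by (simp add: ev norm_mult mult_left_mono)
qed

lemma persist:
  assumes "beval Q x0 y0 = 0" "\<epsilon> > 0"
  shows "eventually (\<lambda>x. \<exists>w. beval Q x w = 0 \<and> dist w y0 < \<epsilon>) (nhds x0)"
proof -
  have "isCont (\<lambda>x. beval Q x y0) x0"
    unfolding beval_def by simp
  then have "((\<lambda>x. beval Q x y0) \<longlongrightarrow> 0) (nhds x0)"
    using assms(1) by (metis isCont_def tendsto_at_iff_tendsto_nhds)
  moreover have "cmod a * \<epsilon> ^ N > 0" using a0 assms(2) by simp
  ultimately have "eventually (\<lambda>x. dist (beval Q x y0) 0 < cmod a * \<epsilon> ^ N) (nhds x0)"
    by (rule tendstoD)
  then show ?thesis
  proof (rule eventually_mono)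
    fix x assume "dist (beval Q x y0) 0 < cmod a * \<epsilon> ^ N"
    then show "\<exists>w. beval Q x w = 0 \<and> dist w y0 < \<epsilon>"
      using factor_bound[OF assms(2), of x y0] by (force simp: not_less)
  qed
qed

lemma rsqf: "cmod x > r \<Longrightarrow> rsquarefree (yp Q x)"
  using simple by (auto simp: rsquarefree_roots beval_yp yp_pderiv)

lemma card_roots: assumes "cmod x > r" shows "card {w. beval Q x w = 0} = N"
proof -
  have fin: "finite {w. poly (yp Q x) w = 0}" using poly_roots_finite[OF yp_nz[of x]] .
  have "N = degree (smult (lead_coeff (yp Q x)) (\<Prod>z|poly (yp Q x) z = 0. [:-z, 1:]))"
    using complex_poly_decompose_rsquarefree[OF rsqf[OF assms]] deg_yp by simp
  also have "\<dots> = card {w. poly (yp Q x) w = 0}"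
    using lc_yp a0 fin by (simp add: degree_prod_sum_eq)
  finally show ?thesis by (simp add: beval_yp)
qed

lemma finite_roots: "finite {w. beval Q x w = 0}"
  using poly_roots_finite[OF yp_nz[of x]] by (simp add: beval_yp)

end

context curve begin

definition "E = {x. cmod x > r}"
definition "S = {(x,y). beval Q x y = 0 \<and> cmod x > r}"

lemma local_structure:
  assumes x0: "cmod x0 > r"
  obtains \<eta> \<epsilon> where "\<eta> > 0" "\<epsilon> > 0" "ball x0 \<eta> \<subseteq> E"
    "\<And>x w. x \<in> ball x0 \<eta> \<Longrightarrow> beval Q x w = 0 \<Longrightarrow> \<exists>y0. beval Q x0 y0 = 0 \<and> dist w y0 < \<epsilon>"
    "\<And>x y0. x \<in> ball x0 \<eta> \<Longrightarrow> beval Q x0 y0 = 0 \<Longrightarrow> \<exists>!w. beval Q x w = 0 \<and> dist w y0 < \<epsilon>"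
    "\<And>y1 y2 w. beval Q x0 y1 = 0 \<Longrightarrow> beval Q x0 y2 = 0 \<Longrightarrow> dist w y1 < \<epsilon> \<Longrightarrow> dist w y2 < \<epsilon> \<Longrightarrow> y1 = y2"
proof -
  define Y0 where "Y0 = {y. beval Q x0 y = 0}"
  have finY0: "finite Y0" unfolding Y0_def by (rule finite_roots)
  have cardY0: "card Y0 = N" unfolding Y0_def by (rule card_roots[OF x0])
  define D where "D = (\<lambda>(y1,y2). dist y1 y2 / 2) ` {(y1,y2). y1 \<in> Y0 \<and> y2 \<in> Y0 \<and> y1 \<noteq> y2}"
  have finD: "finite D" unfolding D_def
    by (rule finite_imageI, rule finite_subset[of _ "Y0 \<times> Y0"]) (use finY0 in auto)
  define \<epsilon> where "\<epsilon> = Min (insert 1 D)"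
  have Dpos: "\<forall>d\<in>D. d > 0" unfolding D_def by auto
  have \<epsilon>pos: "\<epsilon> > 0" unfolding \<epsilon>_def using finD Dpos by (simp add: Min_gr_iff)
  have \<epsilon>le: "\<epsilon> \<le> dist y1 y2 / 2" if "y1 \<in> Y0" "y2 \<in> Y0" "y1 \<noteq> y2" for y1 y2
  proof -
    have "dist y1 y2 / 2 \<in> D" unfolding D_def using that by force
    then have "Min (insert 1 D) \<le> dist y1 y2 / 2" using finD by (intro Min_le) auto
    then show ?thesis unfolding \<epsilon>_def .
  qed
  have sep: "y1 = y2" if "y1 \<in> Y0" "y2 \<in> Y0" "dist w y1 < \<epsilon>" "dist w y2 < \<epsilon>" for y1 y2 w
  proof (rule ccontr)
    assume "y1 \<noteq> y2"
    then have "\<epsilon> \<le> dist y1 y2 / 2" using \<epsilon>le that by blast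
    moreover have "dist y1 y2 \<le> dist w y1 + dist w y2" by (metis dist_commute dist_triangle)
    ultimately show False using that by linarith
  qed
  have "\<forall>y0\<in>Y0. eventually (\<lambda>x. \<exists>w. beval Q x w = 0 \<and> dist w y0 < \<epsilon>) (nhds x0)"
  proof
    fix y0 assume "y0 \<in> Y0"
    then have "beval Q x0 y0 = 0" by (simp add: Y0_def)
    then show "eventually (\<lambda>x. \<exists>w. beval Q x w = 0 \<and> dist w y0 < \<epsilon>) (nhds x0)"
      by (rule persist[OF _ \<epsilon>pos])
  qed
  then have "eventually (\<lambda>x. \<forall>y0\<in>Y0. \<exists>w. beval Q x w = 0 \<and> dist w y0 < \<epsilon>) (nhds x0)"
    by (rule eventually_ball_finite[OF finY0])
  then have "\<exists>d>0. \<forall>x. dist x x0 < d \<longrightarrow> (\<forall>y0\<in>Y0. \<exists>w. beval Q x w = 0 \<and> dist w y0 < \<epsilon>)"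
    by (simp only: eventually_nhds_metric)
  then obtain \<eta>1 where \<eta>1: "\<eta>1 > 0"
    and ex: "\<And>x. dist x x0 < \<eta>1 \<Longrightarrow> \<forall>y0\<in>Y0. \<exists>w. beval Q x w = 0 \<and> dist w y0 < \<epsilon>"
    by blast
  define \<eta> where "\<eta> = min \<eta>1 (cmod x0 - r)"
  have \<eta>pos: "\<eta> > 0" using \<eta>1 x0 by (simp add: \<eta>_def)
  have ballE: "ball x0 \<eta> \<subseteq> E"
  proof
    fix x assume "x \<in> ball x0 \<eta>"
    then have "dist x0 x < cmod x0 - r" by (simp add: \<eta>_def)
    moreover have "cmod x0 \<le> cmod x + dist x0 x" by (metis dist_norm norm_triangle_sub norm_minus_commute)
    ultimately show "x \<in> E" by (simp add: E_def)
  qed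
  have key: "{w. beval Q x w = 0} = (\<lambda>y0. SOME w. beval Q x w = 0 \<and> dist w y0 < \<epsilon>) ` Y0"
    if x: "x \<in> ball x0 \<eta>" for x
  proof -
    define c where "c = (\<lambda>y0. SOME w. beval Q x w = 0 \<and> dist w y0 < \<epsilon>)"
    have dx: "dist x x0 < \<eta>1" using x by (simp add: \<eta>_def dist_commute)
    have c: "beval Q x (c y0) = 0 \<and> dist (c y0) y0 < \<epsilon>" if "y0 \<in> Y0" for y0
      unfolding c_def by (rule someI_ex) (use ex[OF dx] that in blast)
    have inj: "inj_on c Y0"
    proof (rule inj_onI)
      fix y1 y2 assume h: "y1 \<in> Y0" "y2 \<in> Y0" "c y1 = c y2"
      have "dist (c y1) y1 < \<epsilon>" using c[OF h(1)] by simp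
      moreover have "dist (c y1) y2 < \<epsilon>" using c[OF h(2)] h(3) by simp
      ultimately show "y1 = y2" using sep[OF h(1) h(2)] by blast
    qed
    have xE: "cmod x > r" using ballE x by (auto simp: E_def)
    have sub: "c ` Y0 \<subseteq> {w. beval Q x w = 0}" using c by auto
    have "card (c ` Y0) = card {w. beval Q x w = 0}"
      using card_image[OF inj] cardY0 card_roots[OF xE] by simp
    then show ?thesis
      using card_subset_eq[OF finite_roots sub] unfolding c_def by simp
  qed
  show ?thesis
  proof (rule that[OF \<eta>pos \<epsilon>pos ballE])
    fix x w assume x: "x \<in> ball x0 \<eta>" and w: "beval Q x w = 0"
    have dx: "dist x x0 < \<eta>1" using x by (simp add: \<eta>_def dist_commute)
    from w key[OF x] obtain y0 where y0: "y0 \<in> Y0" and wy: "w = (SOME w. beval Q x w = 0 \<and> dist w y0 < \<epsilon>)"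
      by auto
    have "beval Q x w = 0 \<and> dist w y0 < \<epsilon>" unfolding wy
      by (rule someI_ex) (use ex[OF dx] y0 in blast)
    then show "\<exists>y0. beval Q x0 y0 = 0 \<and> dist w y0 < \<epsilon>" using y0 by (auto simp: Y0_def)
  next
    fix x y0 assume x: "x \<in> ball x0 \<eta>" and y0: "beval Q x0 y0 = 0"
    have dx: "dist x x0 < \<eta>1" using x by (simp add: \<eta>_def dist_commute)
    have ex1: "\<exists>w. beval Q x w = 0 \<and> dist w y0 < \<epsilon>" using ex[OF dx] y0 by (auto simp: Y0_def)
    show "\<exists>!w. beval Q x w = 0 \<and> dist w y0 < \<epsilon>"
    proof (rule ex_ex1I[OF ex1])
      have un: "w = (SOME w. beval Q x w = 0 \<and> dist w y0 < \<epsilon>)"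
        if w: "beval Q x w = 0 \<and> dist w y0 < \<epsilon>" for w
      proof -
        from w key[OF x] obtain y1 where y1: "y1 \<in> Y0" and wy: "w = (SOME w. beval Q x w = 0 \<and> dist w y1 < \<epsilon>)"
          by auto
        have "beval Q x w = 0 \<and> dist w y1 < \<epsilon>" unfolding wy
          by (rule someI_ex) (use ex[OF dx] y1 in blast)
        then have "dist w y1 < \<epsilon>" by simp
        then have "y1 = y0" using sep[of y1 y0 w] y1 w y0 by (simp add: Y0_def)
        then show ?thesis using wy by simp
      qed
      fix w1 w2 assume h1: "beval Q x w1 = 0 \<and> dist w1 y0 < \<epsilon>" and h2: "beval Q x w2 = 0 \<and> dist w2 y0 < \<epsilon>"
      show "w1 = w2" using un[OF h1] un[OF h2] by simp
    qed
  next
    fix y1 y2 w assume "beval Q x0 y1 = 0" "beval Q x0 y2 = 0" "dist w y1 < \<epsilon>" "dist w y2 < \<epsilon>"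
    then show "y1 = y2" using sep[of y1 y2 w] by (simp add: Y0_def)
  qed
qed

end

context curve begin

lemma E_open: "open E"
  unfolding E_def by (simp add: open_Collect_less continuous_on_norm continuous_on_const continuous_on_id)

lemma roots_exist: assumes "cmod x > r" shows "\<exists>w. beval Q x w = 0"
proof -
  have "card {w. beval Q x w = 0} \<noteq> 0" using card_roots[OF assms] N1 by simp
  then show ?thesis by (metis (mono_tags, lifting) card.empty empty_Collect_eq)
qed

lemma covering: "covering_space S fst E"
proof (rule covering_spaceI)
  show "continuous_on S fst" by (intro continuous_intros)
  show "fst ` S = E"
  proof
    show "fst ` S \<subseteq> E" by (auto simp: S_def E_def)
    show "E \<subseteq> fst ` S"
    proof
      fix x assume "x \<in> E"
      then obtain w where "beval Q x w = 0" "cmod x > r" using roots_exist by (auto simp: E_def)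
      then have "(x, w) \<in> S" by (simp add: S_def)
      then show "x \<in> fst ` S" by force
    qed
  qed
  fix x0 assume "x0 \<in> E"
  then have x0: "cmod x0 > r" by (simp add: E_def)
  obtain \<eta> \<epsilon> where \<eta>: "\<eta> > 0" and \<epsilon>: "\<epsilon> > 0" and TE: "ball x0 \<eta> \<subseteq> E"
    and cov: "\<And>x w. x \<in> ball x0 \<eta> \<Longrightarrow> beval Q x w = 0 \<Longrightarrow> \<exists>y0. beval Q x0 y0 = 0 \<and> dist w y0 < \<epsilon>"
    and ex1: "\<And>x y0. x \<in> ball x0 \<eta> \<Longrightarrow> beval Q x0 y0 = 0 \<Longrightarrow> \<exists>!w. beval Q x w = 0 \<and> dist w y0 < \<epsilon>"
    and sep: "\<And>y1 y2 w. beval Q x0 y1 = 0 \<Longrightarrow> beval Q x0 y2 = 0 \<Longrightarrow> dist w y1 < \<epsilon> \<Longrightarrow> dist w y2 < \<epsilon> \<Longrightarrow> y1 = y2"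
    by (rule local_structure[OF x0]) blast
  define T where "T = ball x0 \<eta>"
  define R where "R y0 x = (THE w. beval Q x w = 0 \<and> dist w y0 < \<epsilon>)" for y0 x
  have Rprop: "beval Q x (R y0 x) = 0 \<and> dist (R y0 x) y0 < \<epsilon>" if "x \<in> T" "beval Q x0 y0 = 0" for x y0
    unfolding R_def by (rule theI') (use ex1 that in \<open>auto simp: T_def\<close>)
  have Runiq: "R y0 x = w" if "x \<in> T" "beval Q x0 y0 = 0" "beval Q x w = 0" "dist w y0 < \<epsilon>" for x y0 w
    unfolding R_def by (rule the1_equality) (use ex1 that in \<open>auto simp: T_def\<close>)
  have Rcont: "continuous_on T (R y0)" if y0: "beval Q x0 y0 = 0" for y0
    unfolding continuous_on_iff
  proof (intro ballI allI impI)
    fix x1 e assume x1: "x1 \<in> T" and e: "(0::real) < e"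
    define w1 where "w1 = R y0 x1"
    have w1: "beval Q x1 w1 = 0" "dist w1 y0 < \<epsilon>" using Rprop[OF x1 y0] by (auto simp: w1_def)
    define \<epsilon>' where "\<epsilon>' = min e (\<epsilon> - dist w1 y0)"
    have \<epsilon>': "\<epsilon>' > 0" using e w1 by (simp add: \<epsilon>'_def)
    have "eventually (\<lambda>x. \<exists>w. beval Q x w = 0 \<and> dist w w1 < \<epsilon>') (nhds x1)"
      by (rule persist[OF w1(1) \<epsilon>'])
    then have "\<exists>d>0. \<forall>x. dist x x1 < d \<longrightarrow> (\<exists>w. beval Q x w = 0 \<and> dist w w1 < \<epsilon>')"
      by (simp only: eventually_nhds_metric)
    then obtain d where d: "d > 0" and dd: "\<And>x. dist x x1 < d \<Longrightarrow> \<exists>w. beval Q x w = 0 \<and> dist w w1 < \<epsilon>'"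
      by blast
    show "\<exists>d>0. \<forall>x'\<in>T. dist x' x1 < d \<longrightarrow> dist (R y0 x') (R y0 x1) < e"
    proof (intro exI conjI ballI impI)
      show "d > 0" by (rule d)
      fix x' assume x': "x' \<in> T" "dist x' x1 < d"
      then obtain w where w: "beval Q x' w = 0" "dist w w1 < \<epsilon>'" using dd by blast
      have "dist w y0 \<le> dist w w1 + dist w1 y0" by (rule dist_triangle)
      then have "dist w y0 < \<epsilon>" using w(2) by (simp add: \<epsilon>'_def)
      then have "R y0 x' = w" using Runiq[OF x'(1) y0 w(1)] by simp
      then show "dist (R y0 x') (R y0 x1) < e" using w(2) by (simp add: \<epsilon>'_def w1_def)
    qed
  qed
  define V where "V y0 = S \<inter> (T \<times> ball y0 \<epsilon>)" for y0
  show "\<exists>T. x0 \<in> T \<and> openin (top_of_set E) T \<and>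
         (\<exists>v. \<Union>v = S \<inter> fst -` T \<and> (\<forall>u\<in>v. openin (top_of_set S) u) \<and>
              pairwise disjnt v \<and> (\<forall>u\<in>v. \<exists>q. homeomorphism u T fst q))"
  proof (intro exI conjI)
    show "x0 \<in> T" using \<eta> by (simp add: T_def)
    show "openin (top_of_set E) T" unfolding T_def by (rule open_subset[OF TE open_ball])
    show "\<Union>(V ` {y0. beval Q x0 y0 = 0}) = S \<inter> fst -` T"
    proof
      show "\<Union>(V ` {y0. beval Q x0 y0 = 0}) \<subseteq> S \<inter> fst -` T" by (auto simp: V_def)
      show "S \<inter> fst -` T \<subseteq> \<Union>(V ` {y0. beval Q x0 y0 = 0})"
      proof
        fix z assume z: "z \<in> S \<inter> fst -` T"
        obtain x w where zxw: "z = (x, w)" by (cases z)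
        with z have "x \<in> T" "beval Q x w = 0" by (auto simp: S_def)
        then obtain y0 where "beval Q x0 y0 = 0" "dist w y0 < \<epsilon>" using cov by (auto simp: T_def)
        then show "z \<in> \<Union>(V ` {y0. beval Q x0 y0 = 0})"
          using z zxw by (auto simp: V_def dist_commute)
      qed
    qed
    show "\<forall>u\<in>V ` {y0. beval Q x0 y0 = 0}. openin (top_of_set S) u"
      unfolding V_def T_def by (auto intro!: openin_open_Int open_Times)
    show "pairwise disjnt (V ` {y0. beval Q x0 y0 = 0})"
    proof (rule pairwiseI)
      fix u1 u2 assume u: "u1 \<in> V ` {y0. beval Q x0 y0 = 0}" "u2 \<in> V ` {y0. beval Q x0 y0 = 0}" "u1 \<noteq> u2"
      then obtain y1 y2 where y: "beval Q x0 y1 = 0" "beval Q x0 y2 = 0" "u1 = V y1" "u2 = V y2" by auto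
      show "disjnt u1 u2" unfolding disjnt_def
      proof (rule equals0I)
        fix z assume "z \<in> u1 \<inter> u2"
        then have "z \<in> u1" "z \<in> u2" by auto
        then have "dist (snd z) y1 < \<epsilon>" "dist (snd z) y2 < \<epsilon>" using y
          by (auto simp: V_def mem_Times_iff dist_commute)
        then have "y1 = y2" using sep y by blast
        then show False using u y by simp
      qed
    qed
    show "\<forall>u\<in>V ` {y0. beval Q x0 y0 = 0}. \<exists>q. homeomorphism u T fst q"
    proof
      fix u assume "u \<in> V ` {y0. beval Q x0 y0 = 0}"
      then obtain y0 where y0: "beval Q x0 y0 = 0" and u: "u = V y0" by auto
      have TS: "x \<in> T \<Longrightarrow> cmod x > r" for x using TE by (auto simp: T_def E_def)
      show "\<exists>q. homeomorphism u T fst q"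
      proof (intro exI[of _ "\<lambda>x. (x, R y0 x)"], unfold homeomorphism_def, intro conjI ballI)
        show "(fst z, R y0 (fst z)) = z" if "z \<in> u" for z
          using that Runiq[OF _ y0] by (auto simp: u V_def S_def dist_commute)
        show "fst ` u = T"
        proof
          show "fst ` u \<subseteq> T" by (auto simp: u V_def)
          show "T \<subseteq> fst ` u"
          proof
            fix x assume x: "x \<in> T"
            then have "(x, R y0 x) \<in> u" using Rprop[OF x y0] TS[OF x] by (auto simp: u V_def S_def dist_commute)
            then show "x \<in> fst ` u" by force
          qed
        qed
        show "fst (x, R y0 x) = x" if "x \<in> T" for x by simp
        show "(\<lambda>x. (x, R y0 x)) ` T = u"
        proof
          show "(\<lambda>x. (x, R y0 x)) ` T \<subseteq> u"
            using Rprop[OF _ y0] TS by (auto simp: u V_def S_def dist_commute)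
          show "u \<subseteq> (\<lambda>x. (x, R y0 x)) ` T"
          proof
            fix z assume z: "z \<in> u"
            obtain x w where zxw: "z = (x, w)" by (cases z)
            with z have "x \<in> T" "R y0 x = w" using Runiq[OF _ y0] by (auto simp: u V_def S_def dist_commute)
            then show "z \<in> (\<lambda>x. (x, R y0 x)) ` T" using zxw by force
          qed
        qed
        show "continuous_on u fst" by (intro continuous_intros)
        show "continuous_on T (\<lambda>x. (x, R y0 x))"
          by (intro continuous_on_Pair continuous_on_id Rcont[OF y0])
      qed
    qed
  qed
qed

end

lemma diffquot_cont:
  fixes p :: "complex poly" and c :: complex
  defines "B \<equiv> (\<lambda>w. if w = c then poly (pderiv p) c else (poly p w - poly p c) / (w - c))"
  shows "isCont B c" and "\<And>w. poly p w - poly p c = (w - c) * B w"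
proof -
  have "((\<lambda>w. (poly p w - poly p c) / (w - c)) \<longlongrightarrow> poly (pderiv p) c) (at c)"
    using poly_DERIV[of p c] by (simp add: has_field_derivative_iff)
  then have "(B \<longlongrightarrow> poly (pderiv p) c) (at c)"
    by (rule Lim_transform_within[where d=1]) (auto simp: B_def)
  then show "isCont B c" by (simp add: isCont_def B_def)
  show "poly p w - poly p c = (w - c) * B w" for w
    by (simp add: B_def)
qed

lemma impl_deriv:
  fixes Q :: bpoly and X Y :: "complex \<Rightarrow> complex"
  assumes X: "(X has_field_derivative X') (at t1)"
    and Ycont: "isCont Y t1"
    and eq: "eventually (\<lambda>t. beval Q (X t) (Y t) = 0) (nhds t1)"
    and nz: "beval (pderiv Q) (X t1) (Y t1) \<noteq> 0"
  shows "Y field_differentiable (at t1)"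
proof -
  define x1 where "x1 = X t1"
  define w1 where "w1 = Y t1"
  define P1 where "P1 = yp Q x1"
  define Fy where "Fy = poly (pderiv P1) w1"
  have Fy: "Fy \<noteq> 0" using nz by (simp add: Fy_def P1_def x1_def w1_def beval_yp yp_pderiv)
  define B where "B = (\<lambda>w. if w = w1 then poly (pderiv P1) w1 else (poly P1 w - poly P1 w1) / (w - w1))"
  have Bc: "isCont B w1" and Beq: "\<And>w. poly P1 w - poly P1 w1 = (w - w1) * B w"
    using diffquot_cont[where p=P1 and c=w1] unfolding B_def by auto
  define dq where "dq = (\<lambda>j x. if x = x1 then poly (pderiv (coeff Q j)) x1
                         else (poly (coeff Q j) x - poly (coeff Q j) x1) / (x - x1))"
  have dqc: "isCont (dq j) x1" and dqeq: "\<And>x. poly (coeff Q j) x - poly (coeff Q j) x1 = (x - x1) * dq j x" for j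
    using diffquot_cont[where p="coeff Q j" and c=x1] unfolding dq_def by auto
  define Dd where "Dd = (\<lambda>x w. \<Sum>j\<le>degree Q. dq j x * w ^ j)"
  have Deq: "beval Q x w - beval Q x1 w = (x - x1) * Dd x w" for x w
  proof -
    have "beval Q x w - beval Q x1 w = (\<Sum>j\<le>degree Q. (poly (coeff Q j) x - poly (coeff Q j) x1) * w ^ j)"
      by (simp add: beval_sum sum_subtractf algebra_simps)
    also have "\<dots> = (x - x1) * Dd x w"
      by (simp add: dqeq Dd_def sum_distrib_left mult.assoc)
    finally show ?thesis .
  qed
  have Xc: "isCont X t1" using X by (rule DERIV_isCont)
  have Yt: "(Y \<longlongrightarrow> w1) (at t1)" using Ycont by (simp add: isCont_def w1_def)
  have Xt: "(X \<longlongrightarrow> x1) (at t1)" using Xc by (simp add: isCont_def x1_def)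
  have dqt: "((\<lambda>t. dq j (X t)) \<longlongrightarrow> dq j x1) (at t1)" for j
    using isCont_tendsto_compose[OF dqc Xt] .
  have Dt: "((\<lambda>t. Dd (X t) (Y t)) \<longlongrightarrow> Dd x1 w1) (at t1)"
    unfolding Dd_def by (intro tendsto_intros dqt Yt)
  have Bt: "((\<lambda>t. B (Y t)) \<longlongrightarrow> Fy) (at t1)"
    using isCont_tendsto_compose[OF Bc Yt] by (simp add: B_def Fy_def)
  have Xq: "((\<lambda>t. (X t - x1) / (t - t1)) \<longlongrightarrow> X') (at t1)"
    using X by (simp add: has_field_derivative_iff x1_def)
  have ev0: "beval Q x1 w1 = 0" using eventually_nhds_x_imp_x[OF eq] by (simp add: x1_def w1_def)
  have evB: "eventually (\<lambda>t. B (Y t) \<noteq> 0) (at t1)"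
    using tendsto_imp_eventually_ne[OF Bt Fy] .
  have eqa: "eventually (\<lambda>t. beval Q (X t) (Y t) = 0) (at t1)"
    using eq by (simp add: eventually_at_filter eventually_mono)
  have EV: "eventually (\<lambda>t. - ((X t - x1) / (t - t1)) * Dd (X t) (Y t) / B (Y t) = (Y t - w1) / (t - t1)) (at t1)"
    using evB eqa eventually_neq_at_within[of t1 t1 UNIV]
  proof (eventually_elim)
    case (elim t)
    have "0 = beval Q (X t) (Y t) - beval Q x1 (Y t) + (beval Q x1 (Y t) - beval Q x1 w1)"
      using elim ev0 by simp
    also have "\<dots> = (X t - x1) * Dd (X t) (Y t) + (Y t - w1) * B (Y t)"
      using Deq Beq by (simp add: beval_yp P1_def)
    finally have "(Y t - w1) * B (Y t) = - ((X t - x1) * Dd (X t) (Y t))"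
      by (simp add: algebra_simps)
    then have "((Y t - w1) * B (Y t)) / B (Y t) = - ((X t - x1) * Dd (X t) (Y t)) / B (Y t)"
      by simp
    then have e1: "Y t - w1 = - ((X t - x1) * Dd (X t) (Y t)) / B (Y t)"
      using elim by simp
    have "t - t1 \<noteq> 0" using elim by simp
    then show ?case unfolding e1 by (simp add: divide_simps)
  qed
  have T: "((\<lambda>t. - ((X t - x1) / (t - t1)) * Dd (X t) (Y t) / B (Y t)) \<longlongrightarrow> - X' * Dd x1 w1 / Fy) (at t1)"
    by (intro tendsto_intros Xq Dt Bt Fy)
  have "((\<lambda>t. (Y t - w1) / (t - t1)) \<longlongrightarrow> - X' * Dd x1 w1 / Fy) (at t1)"
    by (rule Lim_transform_eventually[OF T EV])
  then have "(Y has_field_derivative (- X' * Dd x1 w1 / Fy)) (at t1)"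
    by (simp add: has_field_derivative_iff w1_def)
  then show ?thesis by (auto simp: field_differentiable_def)
qed


definition sh :: "int \<Rightarrow> complex" where "sh k = \<i> * (of_int k * (of_real pi * 2))"

lemma sh_add: "sh (a + b) = sh a + sh b" by (simp add: sh_def algebra_simps)
lemma sh_mult: "sh (a * b) = of_int a * sh b" by (simp add: sh_def algebra_simps)
lemma sh_diff: "sh (a - b) = sh a - sh b" by (simp add: sh_def algebra_simps)
lemma sh_minus: "sh (- a) = - sh a" by (simp add: sh_def)
lemma sh_0[simp]: "sh 0 = 0" by (simp add: sh_def)
lemma Re_sh[simp]: "Re (sh k) = 0" by (simp add: sh_def)
lemma exp_sh[simp]: "exp (z + sh k) = exp z" by (simp add: sh_def)

lemma exp_eq_sh: "exp w = exp z \<Longrightarrow> \<exists>k. w = z + sh k"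
  by (auto simp: exp_eq sh_def algebra_simps)

context curve begin

definition "H = {u. Re u > ln r}"

lemma H_open: "open H" unfolding H_def by (rule open_halfspace_Re_gt)
lemma H_convex: "convex H" unfolding H_def by (rule convex_halfspace_Re_gt)
lemma H_connected: "connected H" using H_convex convex_connected by blast
lemma H_sh: "u \<in> H \<Longrightarrow> u + sh k \<in> H" by (simp add: H_def)
lemma exp_H: "u \<in> H \<Longrightarrow> exp u \<in> E"
proof -
  assume "u \<in> H"
  then have "exp (ln r) < exp (Re u)" by (simp add: H_def)
  then show "exp u \<in> E" using rpos by (simp add: E_def)
qed
lemma H_iff: "u \<in> H \<longleftrightarrow> exp (Re u) > r"
proof -
  have "exp (ln r) = r" using rpos by simp
  then show ?thesis by (metis H_def exp_less_cancel_iff mem_Collect_eq)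
qed

lemma S_E: "z \<in> S \<Longrightarrow> fst z \<in> E" by (auto simp: S_def E_def)
lemma E_ne0: "x \<in> E \<Longrightarrow> x \<noteq> 0" using rpos by (auto simp: E_def)

lemma exists_lift:
  assumes "z0 \<in> S"
  obtains g u0 where "continuous_on H g" "g \<in> H \<rightarrow> S" "\<And>u. u \<in> H \<Longrightarrow> fst (g u) = exp u"
    "u0 \<in> H" "g u0 = z0"
proof -
  define u0 where "u0 = Ln (fst z0)"
  have x0: "fst z0 \<in> E" using S_E assms by blast
  then have nz: "fst z0 \<noteq> 0" by (rule E_ne0)
  have u0H: "u0 \<in> H" using x0 nz by (simp add: u0_def H_iff E_def)
  have eu0: "exp u0 = fst z0" using nz by (simp add: u0_def)
  have sc: "simply_connected H" using H_convex by (rule convex_imp_simply_connected)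
  have lpc: "locally path_connected H" using H_open by (rule open_imp_locally_path_connected)
  have ce: "continuous_on H exp" by (intro continuous_intros)
  have eH: "exp \<in> H \<rightarrow> E" using exp_H by blast
  obtain g where "continuous_on H g" "g \<in> H \<rightarrow> S" "g u0 = z0" "\<And>u. u \<in> H \<Longrightarrow> fst (g u) = exp u"
    by (rule covering_space_lift_strong[OF covering assms u0H sc lpc ce eH eu0]) metis
  then show ?thesis using that u0H by metis
qed

end


locale lifted = curve +
  fixes g :: "complex \<Rightarrow> complex \<times> complex" and u0 :: complex
  assumes gcont: "continuous_on H g" and gS: "g \<in> H \<rightarrow> S"
    and gfst: "\<And>u. u \<in> H \<Longrightarrow> fst (g u) = exp u" and u0H: "u0 \<in> H"
begin

lemma gS': "u \<in> H \<Longrightarrow> g u \<in> S" using gS by blast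

lemma uniq:
  assumes u1: "u1 \<in> H" and eq: "g (u1 + sh k1) = g (u1 + sh k2)" and u: "u \<in> H"
  shows "g (u + sh k1) = g (u + sh k2)"
proof -
  have shc: "continuous_on H (\<lambda>u. g (u + sh k))" for k
    by (rule continuous_on_compose2[OF gcont]) (auto intro!: continuous_intros H_sh)
  have c1: "continuous_on H exp" by (intro continuous_intros)
  have c2: "exp \<in> H \<rightarrow> E" using exp_H by blast
  have c3: "(\<lambda>u. g (u + sh k)) \<in> H \<rightarrow> S" for k using gS' H_sh by blast
  have c4: "exp x = fst (g (x + sh k))" if "x \<in> H" for x k
    using gfst[OF H_sh[OF that]] by simp
  have "(\<lambda>u. g (u + sh k1)) u = (\<lambda>u. g (u + sh k2)) u"
    using covering_space_lift_unique[OF covering, of "\<lambda>u. g (u + sh k1)" u1 "\<lambda>u. g (u + sh k2)" H exp u]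
      eq c1 c2 c3 c4 shc H_connected u1 u by blast
  then show ?thesis by simp
qed

lemma exists_period: "\<exists>m::nat. m > 0 \<and> g (u0 + sh (int m)) = g u0"
proof -
  define x0 where "x0 = exp u0"
  have x0: "cmod x0 > r" using exp_H[OF u0H] by (simp add: x0_def E_def)
  define B where "B = (\<lambda>y. (x0, y)) ` {y. beval Q x0 y = 0}"
  have finB: "finite B" unfolding B_def using finite_roots by blast
  have cardB: "card B \<le> N" unfolding B_def using card_image_le[OF finite_roots] card_roots[OF x0] by metis
  define F where "F = (\<lambda>k::nat. g (u0 + sh (int k)))"
  have FB: "F ` {0..N} \<subseteq> B"
  proof
    fix z assume "z \<in> F ` {0..N}"
    then obtain k where z: "z = g (u0 + sh (int k))" by (auto simp: F_def)
    have H1: "u0 + sh (int k) \<in> H" by (rule H_sh[OF u0H])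
    have "fst z = x0" using gfst[OF H1] by (simp add: z x0_def)
    moreover have "z \<in> S" using gS'[OF H1] z by simp
    ultimately show "z \<in> B" unfolding B_def S_def by (cases z) auto
  qed
  have "\<not> inj_on F {0..N}"
  proof
    assume "inj_on F {0..N}"
    then have "card {0..N} \<le> card B" using card_inj_on_le[OF _ FB finB] by blast
    then show False using cardB by simp
  qed
  then obtain k1 k2 where k: "k1 \<in> {0..N}" "k2 \<in> {0..N}" "k1 \<noteq> k2" "F k1 = F k2"
    unfolding inj_on_def by blast
  have main: "g (u0 + sh (int (j2 - j1))) = g u0" if "j1 < j2" "F j1 = F j2" for j1 j2
  proof -
    have u1: "u0 - sh (int j1) \<in> H" using H_sh[OF u0H, of "- int j1"] by (simp add: sh_minus)
    have "g (u0 + sh (int j2)) = g (u0 + sh (int j1))" using that(2) by (simp add: F_def)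
    then have "g ((u0 - sh (int j1)) + sh (int j2)) = g ((u0 - sh (int j1)) + sh (int j1))"
      using uniq[OF u0H _ u1, of "int j2" "int j1"] by simp
    moreover have "(u0 - sh (int j1)) + sh (int j2) = u0 + sh (int (j2 - j1))"
      using that(1) by (simp add: of_nat_diff sh_diff)
    ultimately show ?thesis by simp
  qed
  show ?thesis
  proof (cases "k1 < k2")
    case True
    then show ?thesis using main[OF True k(4)] by (intro exI[of _ "k2 - k1"]) auto
  next
    case False
    then have "k2 < k1" using k(3) by simp
    then show ?thesis using main[OF _ k(4)[symmetric]] by (intro exI[of _ "k1 - k2"]) auto
  qed
qed

definition "m = (LEAST m::nat. m > 0 \<and> g (u0 + sh (int m)) = g u0)"

lemma m_prop: "m > 0" "g (u0 + sh (int m)) = g u0"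
  using LeastI_ex[OF exists_period] unfolding m_def by auto

lemma m_min: "0 < k \<Longrightarrow> k < m \<Longrightarrow> g (u0 + sh (int k)) \<noteq> g u0"
  using not_less_Least unfolding m_def by blast

lemma period1: "u \<in> H \<Longrightarrow> g (u + sh (int m)) = g u"
  using uniq[OF u0H, of "int m" 0] m_prop by simp

lemma period_nat: "u \<in> H \<Longrightarrow> g (u + sh (int m * int n)) = g u"
proof (induction n arbitrary: u)
  case 0 then show ?case by simp
next
  case (Suc n)
  have eqn: "u + sh (int m * int (Suc n)) = (u + sh (int m * int n)) + sh (int m)"
    by (simp add: sh_add[symmetric] algebra_simps)
  have "g (u + sh (int m * int (Suc n))) = g ((u + sh (int m * int n)) + sh (int m))"
    by (simp only: eqn)
  also have "\<dots> = g (u + sh (int m * int n))" by (rule period1[OF H_sh[OF Suc.prems]])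
  also have "\<dots> = g u" by (rule Suc.IH[OF Suc.prems])
  finally show ?case .
qed

lemma period: "u \<in> H \<Longrightarrow> g (u + sh (int m * k)) = g u"
proof (cases "k \<ge> 0")
  case True
  assume u: "u \<in> H"
  obtain n where "k = int n" using True nonneg_int_cases by blast
  then show ?thesis using period_nat[OF u] by simp
next
  case False
  assume u: "u \<in> H"
  define n where "n = nat (- k)"
  have n: "k = - int n" using False by (simp add: n_def)
  have u': "u + sh (int m * k) \<in> H" by (rule H_sh[OF u])
  have "g ((u + sh (int m * k)) + sh (int m * int n)) = g (u + sh (int m * k))"
    by (rule period_nat[OF u'])
  moreover have "(u + sh (int m * k)) + sh (int m * int n) = u"
    by (simp add: n sh_add[symmetric])
  ultimately show ?thesis by simp
qed

lemma inj_mod: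
  assumes u: "u \<in> H" and u': "u' \<in> H" and eq: "g u = g u'"
  shows "\<exists>q. u' = u + sh (int m * q)"
proof -
  have "exp u' = exp u" using gfst[OF u] gfst[OF u'] eq by simp
  then obtain j where j: "u' = u + sh j" using exp_eq_sh by blast
  define q where "q = j div int m"
  define \<rho> where "\<rho> = j mod int m"
  have jq: "j = int m * q + \<rho>" by (simp add: q_def \<rho>_def)
  have \<rho>: "0 \<le> \<rho>" "\<rho> < int m" using m_prop(1) by (auto simp: \<rho>_def)
  have "g (u + sh \<rho>) = g ((u + sh j) + sh (int m * (- q)))"
    by (simp add: jq sh_add[symmetric] algebra_simps)
  also have "\<dots> = g (u + sh j)" by (rule period[OF H_sh[OF u]])
  also have "\<dots> = g u" using j eq by simp
  finally have "g (u + sh \<rho>) = g (u + sh 0)" by simp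
  then have "g (u0 + sh \<rho>) = g (u0 + sh 0)" by (rule uniq[OF u _ u0H])
  then have g\<rho>: "g (u0 + sh \<rho>) = g u0" by simp
  have "\<rho> = 0"
  proof (rule ccontr)
    assume "\<rho> \<noteq> 0"
    then have "0 < nat \<rho>" "nat \<rho> < m" using \<rho> by auto
    then have "g (u0 + sh (int (nat \<rho>))) \<noteq> g u0" by (rule m_min)
    then show False using g\<rho> \<rho>(1) by simp
  qed
  then show ?thesis using j jq by auto
qed

end

context lifted begin

lemma comp_eq: "connected_component_set S (g u0) = g ` H"
proof
  show "g ` H \<subseteq> connected_component_set S (g u0)"
  proof (rule connected_component_maximal)
    show "g u0 \<in> g ` H" using u0H by blast
    show "connected (g ` H)" by (rule connected_continuous_image[OF gcont H_connected])
    show "g ` H \<subseteq> S" using gS' by blast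
  qed
  show "connected_component_set S (g u0) \<subseteq> g ` H"
  proof
    fix z assume zK: "z \<in> connected_component_set S (g u0)"
    have lpS: "locally path_connected S"
      using covering_space_locally_path_connected_eq[OF covering] open_imp_locally_path_connected[OF E_open]
      by blast
    then have "z \<in> path_component_set S (g u0)" using zK by (simp add: path_component_eq_connected_component_set)
    then obtain \<gamma> where \<gamma>: "path \<gamma>" "path_image \<gamma> \<subseteq> S" "pathstart \<gamma> = g u0" "pathfinish \<gamma> = z"
      by (auto simp: path_component_def)
    define \<alpha> where "\<alpha> = fst \<circ> \<gamma>"
    have pa: "path \<alpha>" unfolding \<alpha>_def by (rule path_continuous_image[OF \<gamma>(1)]) (intro continuous_intros)
    have aE: "\<alpha> t \<in> E" if "t \<in> {0..1}" for t
    proof -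
      have "\<gamma> t \<in> S" using \<gamma>(2) that by (auto simp: path_image_def)
      then show ?thesis using S_E by (simp add: \<alpha>_def)
    qed
    have aim: "path_image \<alpha> \<subseteq> - {0}" using aE E_ne0 by (auto simp: path_image_def)
    have as: "pathstart \<alpha> = exp u0" using \<gamma>(3) gfst[OF u0H] by (simp add: \<alpha>_def pathstart_def)
    obtain \<beta> where \<beta>: "path \<beta>" "pathstart \<beta> = u0" "\<And>t. t \<in> {0..1} \<Longrightarrow> exp (\<beta> t) = \<alpha> t"
      using covering_space_lift_path_strong[OF covering_space_exp_punctured_plane _ pa aim as] by blast
    have bH: "\<beta> t \<in> H" if "t \<in> {0..1}" for t
    proof -
      have "cmod (exp (\<beta> t)) > r" using aE[OF that] \<beta>(3)[OF that] by (simp add: E_def)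
      then show ?thesis by (simp add: H_iff)
    qed
    have cb: "continuous_on {0..1} \<beta>" using \<beta>(1) by (simp add: path_def)
    have cgb: "continuous_on {0..1} (g \<circ> \<beta>)"
      by (rule continuous_on_compose[OF cb continuous_on_subset[OF gcont]]) (use bH in auto)
    have "(g \<circ> \<beta>) 1 = \<gamma> 1"
    proof (rule covering_space_lift_unique[OF covering, of "g \<circ> \<beta>" 0 \<gamma> "{0..1}" \<alpha> 1])
      show "(g \<circ> \<beta>) 0 = \<gamma> 0" using \<beta>(2) \<gamma>(3) by (simp add: pathstart_def)
      show "continuous_on {0..1} \<alpha>" using pa by (simp add: path_def)
      show "\<alpha> \<in> {0..1} \<rightarrow> E" using aE by blast
      show "continuous_on {0..1} (g \<circ> \<beta>)" by (rule cgb)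
      show "g \<circ> \<beta> \<in> {0..1} \<rightarrow> S" using bH gS' by auto
      show "\<alpha> x = fst ((g \<circ> \<beta>) x)" if "x \<in> {0..1}" for x
        using gfst[OF bH[OF that]] \<beta>(3)[OF that] by simp
      show "continuous_on {0..1} \<gamma>" using \<gamma>(1) by (simp add: path_def)
      show "\<gamma> \<in> {0..1} \<rightarrow> S" using \<gamma>(2) by (auto simp: path_image_def)
      show "\<alpha> x = fst (\<gamma> x)" if "x \<in> {0..1}" for x by (simp add: \<alpha>_def)
    qed auto
    then have "z = g (\<beta> 1)" using \<gamma>(4) by (simp add: pathfinish_def)
    then show "z \<in> g ` H" using bH[of 1] by auto
  qed
qed

end

abbreviation "Dp \<equiv> ball (0::complex) 1 - {0}"

lemma Dp_open: "open Dp" by (intro open_Diff open_ball finite_imp_closed) auto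

lemma local_log:
  assumes "t1 \<noteq> (0::complex)"
  shows "\<exists>lg. isCont lg t1 \<and> (\<forall>t. t \<noteq> 0 \<longrightarrow> exp (lg t) = t)"
proof (cases "t1 \<in> \<real>\<^sub>\<le>\<^sub>0")
  case False
  then show ?thesis by (intro exI[of _ Ln]) (auto intro!: continuous_at_Ln)
next
  case True
  then have "- t1 \<notin> \<real>\<^sub>\<le>\<^sub>0" using assms by (auto simp: complex_nonpos_Reals_iff complex_eq_iff)
  then have "isCont (\<lambda>t. Ln (- t) + of_real pi * \<i>) t1" by (intro continuous_intros) auto
  moreover have "exp (Ln (- t) + of_real pi * \<i>) = t" if "t \<noteq> 0" for t
    using that by (simp add: exp_add)
  ultimately show ?thesis by blast
qed

context lifted begin

definition "L = complex_of_real (ln r)"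
definition "ff t = g (L - of_nat m * Ln t)"
definition "Th u = exp (- (u - L) / of_nat m)"
definition "GG z = Th (SOME u. u \<in> H \<and> g u = z)"

lemma expL: "exp L = of_real r"
  using rpos by (simp add: L_def exp_of_real)

lemma Hlog: assumes "t \<in> Dp" "exp lg = t" shows "L - of_nat m * lg \<in> H"
proof -
  have "exp (Re lg) < 1" using assms by (metis norm_exp_eq_Re mem_ball_0 DiffD1)
  then have "Re lg < 0" by simp
  then have "of_nat m * Re lg < 0" using m_prop(1) by (simp add: mult_pos_neg)
  then show ?thesis by (simp add: H_def L_def)
qed

lemma anylog: assumes t: "t \<in> Dp" and l: "exp lg = t" shows "ff t = g (L - of_nat m * lg)"
proof -
  have t0: "t \<noteq> 0" using t by simp
  have "exp lg = exp (Ln t)" using l t0 by simp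
  then obtain k where k: "lg = Ln t + sh k" using exp_eq_sh by blast
  have H1: "L - of_nat m * Ln t \<in> H" by (rule Hlog[OF t]) (simp add: t0)
  have e: "L - of_nat m * lg = (L - of_nat m * Ln t) + sh (int m * (- k))"
    by (simp add: k sh_def algebra_simps)
  have "g (L - of_nat m * lg) = g ((L - of_nat m * Ln t) + sh (int m * (- k)))" by (simp only: e)
  also have "\<dots> = g (L - of_nat m * Ln t)" by (rule period[OF H1])
  finally have "g (L - of_nat m * lg) = g (L - of_nat m * Ln t)" .
  then show ?thesis by (simp add: ff_def)
qed

lemma ffH: "t \<in> Dp \<Longrightarrow> L - of_nat m * Ln t \<in> H"
  by (rule Hlog) auto

lemma ff_K: "t \<in> Dp \<Longrightarrow> ff t \<in> g ` H"
  using ffH by (auto simp: ff_def)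

lemma ff_S: "t \<in> Dp \<Longrightarrow> ff t \<in> S"
  using ffH gS' by (auto simp: ff_def)

lemma fst_ff: assumes "t \<in> Dp" shows "fst (ff t) = of_real r / t ^ m"
proof -
  have t0: "t \<noteq> 0" using assms by simp
  have "fst (ff t) = exp (L - of_nat m * Ln t)" using gfst[OF ffH[OF assms]] by (simp add: ff_def)
  also have "\<dots> = exp L / exp (of_nat m * Ln t)" by (simp add: exp_diff)
  also have "\<dots> = of_real r / t ^ m" using t0 by (simp add: expL exp_of_nat_mult)
  finally show ?thesis .
qed

lemma Th_D: assumes "u \<in> H" shows "Th u \<in> Dp"
proof -
  have "Re u > ln r" using assms by (simp add: H_def)
  then have "Re (- (u - L) / of_nat m) < 0" using m_prop(1)
    by (simp add: L_def divide_neg_pos)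
  then show ?thesis by (simp add: Th_def)
qed

lemma Th_sh: "Th (u + sh (int m * k)) = Th u"
proof -
  have "- (u + sh (int m * k) - L) / of_nat m = - (u - L) / of_nat m + sh (- k)"
    using m_prop(1) by (simp add: sh_def field_simps)
  then show ?thesis by (simp add: Th_def)
qed

lemma some_in: assumes "z \<in> g ` H" shows "(SOME u. u \<in> H \<and> g u = z) \<in> H \<and> g (SOME u. u \<in> H \<and> g u = z) = z"
  by (rule someI_ex) (use assms in auto)

lemma GG_D: "z \<in> g ` H \<Longrightarrow> GG z \<in> Dp"
  using some_in Th_D by (simp add: GG_def)

lemma GG_ff: assumes t: "t \<in> Dp" shows "GG (ff t) = t"
proof -
  define ut where "ut = L - of_nat m * Ln t"
  have ut: "ut \<in> H" using ffH[OF t] by (simp add: ut_def)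
  have fft: "ff t = g ut" by (simp add: ff_def ut_def)
  define u' where "u' = (SOME u. u \<in> H \<and> g u = ff t)"
  have u': "u' \<in> H" "g u' = g ut" using some_in[of "ff t"] fft ut by (auto simp: u'_def)
  obtain q where q: "u' = ut + sh (int m * q)" using inj_mod[OF ut u'(1) u'(2)[symmetric]] by blast
  have "GG (ff t) = Th u'" by (simp add: GG_def u'_def)
  also have "\<dots> = Th ut" by (simp add: q Th_sh)
  also have "\<dots> = exp (Ln t)" using m_prop(1) by (simp add: Th_def ut_def)
  also have "\<dots> = t" using t by simp
  finally show ?thesis .
qed

lemma ff_GG: assumes z: "z \<in> g ` H" shows "ff (GG z) = z"
proof -
  define u' where "u' = (SOME u. u \<in> H \<and> g u = z)"
  have u': "u' \<in> H" "g u' = z" using some_in[OF z] by (auto simp: u'_def)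
  have GGz: "GG z = Th u'" by (simp add: GG_def u'_def)
  have "ff (GG z) = g (L - of_nat m * (- (u' - L) / of_nat m))"
    using anylog[OF GG_D[OF z]] GGz by (simp add: Th_def)
  also have "L - of_nat m * (- (u' - L) / of_nat m) = u'" using m_prop(1) by simp
  finally show ?thesis using u' by simp
qed

lemma ff_cont_at: assumes t1: "t1 \<in> Dp" shows "isCont ff t1"
proof -
  obtain lg where l: "isCont lg t1" "\<And>t. t \<noteq> 0 \<Longrightarrow> exp (lg t) = t"
    using local_log[of t1] t1 by auto
  have H1: "L - of_nat m * lg t1 \<in> H" using Hlog[OF t1 l(2)] t1 by simp
  have "isCont g (L - of_nat m * lg t1)"
    using gcont H_open H1 by (simp add: continuous_on_eq_continuous_at)
  then have c: "isCont (\<lambda>t. g (L - of_nat m * lg t)) t1"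
    by (rule continuous_at_compose[of _ "\<lambda>t. L - of_nat m * lg t", unfolded o_def, rotated]) (intro continuous_intros l(1))
  have "eventually (\<lambda>t. t \<in> Dp) (nhds t1)" using Dp_open t1 by (rule eventually_nhds_in_open)
  then have ev: "eventually (\<lambda>t. ff t = g (L - of_nat m * lg t)) (nhds t1)"
    by (rule eventually_mono) (use anylog l(2) in auto)
  show ?thesis by (subst isCont_cong[OF ev]) (rule c)
qed

lemma ff_cont: "continuous_on Dp ff"
  using ff_cont_at by (simp add: continuous_on_eq_continuous_at[OF Dp_open])

end

context lifted begin

lemma GG_cont: "continuous_on (g ` H) GG"
  unfolding continuous_on_def
proof
  fix z1 assume z1: "z1 \<in> g ` H"
  define F where "F = at z1 within g ` H"
  define t1 where "t1 = GG z1"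
  have t1: "t1 \<in> Dp" using GG_D[OF z1] by (simp add: t1_def)
  have z1f: "ff t1 = z1" using ff_GG[OF z1] by (simp add: t1_def)
  have HS: "g ` H \<subseteq> S" using gS' by blast
  have z1S: "z1 \<in> S" using z1 HS by blast
  define x1 where "x1 = fst z1"
  have x1: "x1 = of_real r / t1 ^ m" using fst_ff[OF t1] z1f by (simp add: x1_def)
  have x1nz: "x1 \<noteq> 0" using rpos t1 x1 by simp
  have t1m: "t1 ^ m * x1 = of_real r" using t1 x1 by simp
  obtain T U q where T: "z1 \<in> T" "openin (top_of_set S) T" and hom: "homeomorphism T U fst q"
    using covering_space_local_homeomorphism[OF covering z1S] by metis
  obtain Op where O: "open Op" "T = S \<inter> Op" using T(2) by (auto simp: openin_open)
  have qinv: "\<And>a. a \<in> T \<Longrightarrow> q (fst a) = a" using hom by (simp add: homeomorphism_def)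
  define Psi where "Psi x = t1 * exp (- Ln (x / x1) / of_nat m)" for x
  have Psi1: "Psi x1 = t1" using x1nz by (simp add: Psi_def)
  have one: "x1 / x1 \<notin> \<real>\<^sub>\<le>\<^sub>0" using x1nz by (simp add: complex_nonpos_Reals_iff)
  have cPsi: "isCont Psi x1" unfolding Psi_def by (intro continuous_intros one) (use x1nz m_prop(1) in auto)
  have fstPsi: "of_real r / (Psi x) ^ m = x" if "x \<noteq> 0" for x
  proof -
    have "exp (- Ln (x / x1) / of_nat m) ^ m = exp (of_nat m * (- Ln (x / x1) / of_nat m))"
      by (simp only: exp_of_nat_mult)
    also have "\<dots> = exp (- Ln (x / x1))" using m_prop(1) by simp
    also have "\<dots> = x1 / x" using that x1nz by (simp add: exp_minus)
    finally have "(Psi x) ^ m = t1 ^ m * (x1 / x)" by (simp add: Psi_def power_mult_distrib)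
    moreover have "Psi x \<noteq> 0" using t1 by (simp add: Psi_def)
    ultimately show ?thesis using that x1nz t1m t1 by (simp add: field_simps)
  qed
  have tf: "(fst \<longlongrightarrow> x1) F" unfolding F_def x1_def by (intro tendsto_intros)
  have tPsi: "((\<lambda>z. Psi (fst z)) \<longlongrightarrow> t1) F" using isCont_tendsto_compose[OF cPsi tf] Psi1 by simp
  have th: "((\<lambda>z. ff (Psi (fst z))) \<longlongrightarrow> z1) F"
    using isCont_tendsto_compose[OF ff_cont_at[OF t1] tPsi] z1f by simp
  have z1O: "z1 \<in> Op" using T O by blast
  have ev1: "eventually (\<lambda>z. Psi (fst z) \<in> Dp) F" by (rule topological_tendstoD[OF tPsi Dp_open t1])
  have ev2: "eventually (\<lambda>z. ff (Psi (fst z)) \<in> Op) F" by (rule topological_tendstoD[OF th O(1) z1O])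
  have ev3: "eventually (\<lambda>z. z \<in> Op \<and> z \<in> g ` H) F"
    unfolding F_def eventually_at_filter
    by (rule eventually_mono[OF eventually_nhds_in_open[OF O(1) z1O]]) auto
  have ev: "eventually (\<lambda>z. Psi (fst z) = GG z) F"
    using ev1 ev2 ev3
  proof eventually_elim
    case (elim z)
    define w where "w = ff (Psi (fst z))"
    have wS: "w \<in> S" using ff_S[OF elim(1)] by (simp add: w_def)
    have wT: "w \<in> T" using wS elim(2) O by (simp add: w_def)
    have zS: "z \<in> S" using elim(3) HS by blast
    have zT: "z \<in> T" using zS elim(3) O by simp
    have fz: "fst z \<noteq> 0" using S_E[OF zS] E_ne0 by blast
    have fw: "fst w = fst z" using fst_ff[OF elim(1)] fstPsi[OF fz] by (simp add: w_def)
    have "w = q (fst w)" using qinv[OF wT] by (rule sym)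
    also have "\<dots> = q (fst z)" by (simp only: fw)
    also have "\<dots> = z" by (rule qinv[OF zT])
    finally have "w = z" .
    then have "GG z = GG (ff (Psi (fst z)))" by (simp add: w_def)
    also have "\<dots> = Psi (fst z)" by (rule GG_ff[OF elim(1)])
    finally show ?case by simp
  qed
  have "(GG \<longlongrightarrow> t1) F" by (rule Lim_transform_eventually[OF tPsi ev])
  then show "(GG \<longlongrightarrow> GG z1) (at z1 within g ` H)" by (simp add: F_def t1_def)
qed

lemma homeo: "homeomorphism Dp (g ` H) ff GG"
  unfolding homeomorphism_def
proof (intro conjI ballI)
  show "GG (ff x) = x" if "x \<in> Dp" for x using GG_ff[OF that] .
  show "ff (GG y) = y" if "y \<in> g ` H" for y using ff_GG[OF that] .
  show "ff ` Dp = g ` H"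
  proof
    show "ff ` Dp \<subseteq> g ` H" by (rule image_subsetI) (rule ff_K)
    show "g ` H \<subseteq> ff ` Dp"
    proof
      fix z assume z: "z \<in> g ` H"
      then have "z = ff (GG z)" using ff_GG by simp
      then show "z \<in> ff ` Dp" using GG_D[OF z] by (rule image_eqI)
    qed
  qed
  show "GG ` g ` H = Dp"
  proof
    show "GG ` g ` H \<subseteq> Dp" by (rule image_subsetI) (rule GG_D)
    show "Dp \<subseteq> GG ` g ` H"
    proof
      fix t assume t: "t \<in> Dp"
      then have "t = GG (ff t)" using GG_ff by simp
      then show "t \<in> GG ` g ` H" using ff_K[OF t] by (rule image_eqI)
    qed
  qed
  show "continuous_on Dp ff" by (rule ff_cont)
  show "continuous_on (g ` H) GG" by (rule GG_cont)
qed

definition "X t = of_real r / t ^ m"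

lemma X_deriv:
  fixes t :: complex
  assumes "t \<noteq> 0"
  shows "(X has_field_derivative ((0 * t ^ m - of_real r * (of_nat m * (1 * t ^ (m - Suc 0)))) / (t ^ m * t ^ m))) (at t)"
  unfolding X_def by (rule DERIV_divide[OF DERIV_const DERIV_power[OF DERIV_ident]]) (use assms in simp)

lemma X_deriv_nz:
  fixes t :: complex
  assumes "t \<noteq> 0"
  shows "(0 * t ^ m - of_real r * (of_nat m * (1 * t ^ (m - Suc 0)))) / (t ^ m * t ^ m) \<noteq> 0"
proof -
  have "r \<noteq> 0" "m \<noteq> 0" using rpos m_prop(1) by auto
  then have n: "complex_of_real r * (of_nat m * (1 * t ^ (m - Suc 0))) \<noteq> 0" using assms by simp
  have d: "t ^ m * t ^ m \<noteq> 0" using assms by simp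
  show ?thesis using n d by (simp only: divide_eq_0_iff mult_zero_left diff_0 neg_equal_0_iff_equal) simp
qed

lemma fst_ff_X: "t \<in> Dp \<Longrightarrow> fst (ff t) = X t"
  using fst_ff by (simp add: X_def)

lemma final: "biholo_punctured_disc (connected_component_set S (g u0))"
  unfolding biholo_punctured_disc_def comp_eq
proof (intro exI conjI)
  show "homeomorphism Dp (g ` H) ff GG" by (rule homeo)
  show "(\<lambda>z. fst (ff z)) holomorphic_on Dp"
  proof (rule holomorphic_transform[of X])
    show "X holomorphic_on Dp" unfolding X_def by (intro holomorphic_intros) auto
  qed (simp add: fst_ff_X)
  show "(\<lambda>z. snd (ff z)) holomorphic_on Dp"
    unfolding holomorphic_on_def
  proof
    fix t1 assume t1: "t1 \<in> Dp"
    have evD: "eventually (\<lambda>t. t \<in> Dp) (nhds t1)" using Dp_open t1 by (rule eventually_nhds_in_open)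
    have "(\<lambda>z. snd (ff z)) field_differentiable (at t1)"
    proof (rule impl_deriv[OF X_deriv, of t1 _ Q])
      show "t1 \<noteq> 0" using t1 by simp
      show "isCont (\<lambda>z. snd (ff z)) t1" using ff_cont_at[OF t1] by (intro continuous_intros)
      show "eventually (\<lambda>t. beval Q (X t) (snd (ff t)) = 0) (nhds t1)"
      proof (rule eventually_mono[OF evD])
        fix t assume t: "t \<in> Dp"
        have "ff t \<in> S" by (rule ff_S[OF t])
        then have "beval Q (fst (ff t)) (snd (ff t)) = 0" by (cases "ff t") (auto simp: S_def)
        then show "beval Q (X t) (snd (ff t)) = 0" using fst_ff_X[OF t] by simp
      qed
      have "ff t1 \<in> S" by (rule ff_S[OF t1])
      then have "cmod (X t1) > r" "beval Q (X t1) (snd (ff t1)) = 0"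
        using fst_ff_X[OF t1] by (auto simp: S_def split: prod.splits)
      then show "beval (pderiv Q) (X t1) (snd (ff t1)) \<noteq> 0" by (rule simple)
    qed
    then show "(\<lambda>z. snd (ff z)) field_differentiable (at t1 within Dp)"
      by (rule field_differentiable_at_within)
  qed
  show "\<forall>z\<in>Dp. deriv (\<lambda>w. fst (ff w)) z \<noteq> 0 \<or> deriv (\<lambda>w. snd (ff w)) z \<noteq> 0"
  proof
    fix z assume z: "z \<in> Dp"
    have evD: "eventually (\<lambda>t. t \<in> Dp) (nhds z)" using Dp_open z by (rule eventually_nhds_in_open)
    have "deriv (\<lambda>w. fst (ff w)) z = deriv X z"
      by (rule deriv_cong_ev[OF eventually_mono[OF evD]]) (auto simp: fst_ff_X)
    also have "\<dots> = (0 * z ^ m - of_real r * (of_nat m * (1 * z ^ (m - Suc 0)))) / (z ^ m * z ^ m)"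
      by (rule DERIV_imp_deriv[OF X_deriv]) (use z in simp)
    finally show "deriv (\<lambda>w. fst (ff w)) z \<noteq> 0 \<or> deriv (\<lambda>w. snd (ff w)) z \<noteq> 0"
      using X_deriv_nz[of z] z by simp
  qed
qed

end

context curve begin

lemma main_curve:
  assumes "z0 \<in> S"
  shows "biholo_punctured_disc (connected_component_set S z0)"
proof -
  obtain g u0 where g: "continuous_on H g" "g \<in> H \<rightarrow> S" "\<And>u. u \<in> H \<Longrightarrow> fst (g u) = exp u"
    "u0 \<in> H" "g u0 = z0"
    using exists_lift[OF assms] by metis
  interpret lifted Q N a r g u0 by unfold_locales (use g in auto)
  show ?thesis using final g(5) by simp
qed

end

lemma beval_zero[simp]: "beval 0 x y = 0" by (simp add: beval_def)

lemma coeff_bconst: "coeff (bconst c) j = (if j = 0 then [:c:] else 0)"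
  by (simp add: bconst_def coeff_pCons split: nat.splits)

lemma pderiv_bconst: "pderiv (bconst c) = 0"
  by (simp add: bconst_def pderiv_pCons)

lemma degree_from_coeffs:
  fixes Q :: bpoly
  assumes "\<And>j. j > N \<Longrightarrow> coeff Q j = 0" "coeff Q N = [:a:]" "a \<noteq> 0"
  shows "degree Q = N"
proof (rule antisym)
  show "degree Q \<le> N" using assms(1) by (intro degree_le) auto
  show "N \<le> degree Q" using assms(2,3) by (intro le_degree) auto
qed

lemma bcoeff_s:
  fixes k l n :: nat
  assumes "k \<ge> 2"
  shows "bcoeff ((bX ^ k + bY ^ l) ^ n) 0 (l * n) = 1"
proof -
  define s where "s = (bX ^ k + bY ^ l) ^ n"
  have "poly (yp s 0) = poly (monom 1 (l * n))"
  proof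
    fix y
    have "poly (yp s 0) y = beval s 0 y" by (simp add: beval_yp)
    also have "\<dots> = (0 ^ k + y ^ l) ^ n" by (simp add: s_def beval_power beval_add)
    also have "\<dots> = y ^ (l * n)"
      using assms by (simp add: power_0_left power_mult)
    finally show "poly (yp s 0) y = poly (monom 1 (l * n)) y" by (simp add: poly_monom)
  qed
  then have "yp s 0 = monom 1 (l * n)" by (simp add: poly_eq_poly_eq_iff)
  then have "coeff (yp s 0) (l * n) = 1" by simp
  then show ?thesis by (simp add: coeff_yp bcoeff_def s_def poly_0_coeff_0)
qed

lemma qh_shape:
  fixes q :: bpoly and k l n :: nat
  assumes k: "k \<ge> 2" and l: "l \<ge> 2" and lqh: "lqh_part_is k l q ((bX ^ k + bY ^ l) ^ n)"
  shows "\<And>j. j > l * n \<Longrightarrow> coeff q j = 0" and "coeff q (l * n) = [:1:]"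
proof -
  define W where "W = {l * i + k * j | i j. bcoeff q i j \<noteq> 0}"
  define M where "M = (\<Sum>j\<le>degree q. degree (coeff q j))"
  have sub: "W \<subseteq> (\<lambda>(i, j). l * i + k * j) ` ({..M} \<times> {..degree q})"
  proof
    fix w assume "w \<in> W"
    then obtain i j where w: "w = l * i + k * j" and nz: "bcoeff q i j \<noteq> 0" by (auto simp: W_def)
    have cj: "coeff q j \<noteq> 0" using nz by (auto simp: bcoeff_def)
    then have jd: "j \<le> degree q" by (rule le_degree)
    have "i \<le> degree (coeff q j)" using nz by (intro le_degree) (simp add: bcoeff_def)
    also have "\<dots> \<le> M" unfolding M_def by (rule member_le_sum) (use jd in auto)
    finally show "w \<in> (\<lambda>(i, j). l * i + k * j) ` ({..M} \<times> {..degree q})" using jd w by force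
  qed
  have finW: "finite W" by (rule finite_subset[OF sub]) auto
  have le: "l * i + k * j \<le> wdeg k l q" if "bcoeff q i j \<noteq> 0" for i j
    unfolding wdeg_def by (rule Max_ge) (use finW that in \<open>auto simp: W_def\<close>)
  have "lqh_coeff k l q 0 (l * n) = 1" using lqh bcoeff_s[OF k, of l n] by (simp add: lqh_part_is_def)
  then have wd: "k * (l * n) = wdeg k l q" and b1: "bcoeff q 0 (l * n) = 1"
    by (auto simp: lqh_coeff_def split: if_splits)
  show "coeff q j = 0" if "j > l * n" for j
  proof (rule poly_eqI)
    fix i
    show "coeff (coeff q j) i = coeff 0 i"
    proof (rule ccontr)
      assume "coeff (coeff q j) i \<noteq> coeff 0 i"
      then have "bcoeff q i j \<noteq> 0" by (simp add: bcoeff_def)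
      then have "l * i + k * j \<le> k * (l * n)" using le wd by simp
      moreover have "k * (l * n) < k * j" using that k by simp
      ultimately show False by simp
    qed
  qed
  show "coeff q (l * n) = [:1:]"
  proof (rule poly_eqI)
    fix i
    show "coeff (coeff q (l * n)) i = coeff [:1:] i"
    proof (cases i)
      case 0 then show ?thesis using b1 by (simp add: bcoeff_def)
    next
      case (Suc i')
      have "bcoeff q i (l * n) = 0"
      proof (rule ccontr)
        assume "bcoeff q i (l * n) \<noteq> 0"
        then have "l * i + k * (l * n) \<le> k * (l * n)" using le wd by fastforce
        moreover have "l * i > 0" using Suc l by simp
        ultimately show False by simp
      qed
      then show ?thesis using Suc by (simp add: bcoeff_def)
    qed
  qed
qed

lemma lin_shape:
  fixes q :: bpoly
  assumes "blinear q"
  shows "\<And>j. j > 1 \<Longrightarrow> coeff q j = 0" and "coeff q 1 = [:bcoeff q 0 1:]"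
proof -
  show "coeff q j = 0" if "j > 1" for j
    by (rule poly_eqI) (use assms that in \<open>auto simp: blinear_def bcoeff_def\<close>)
  show "coeff q 1 = [:bcoeff q 0 1:]"
  proof (rule poly_eqI)
    fix i show "coeff (coeff q 1) i = coeff [:bcoeff q 0 1:] i"
      using assms by (cases i) (auto simp: blinear_def bcoeff_def)
  qed
qed

theorem lemma1p6:
  fixes p q :: bpoly and \<alpha> :: "bpoly \<times> bpoly" and \<delta> r :: real
  assumes prim: "primitive p"
    and iso: "zero_locus_iso_C p"
    and aut: "poly_automorphism \<alpha>"
    and q_def: "\<forall>x y. beval q x y = beval p (fst (bmap \<alpha> (x, y))) (snd (bmap \<alpha> (x, y)))"
    and shape: "blinear q \<or>
       (\<exists>k l n :: nat. k \<ge> 2 \<and> l \<ge> 2 \<and> coprime k l \<and> n \<ge> 1 \<and>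
          lqh_part_is k l q ((bX ^ k + bY ^ l) ^ n))"
    and \<delta>pos: "\<delta> > 0" and rpos: "r > 0"
    and crit: "\<forall>x y. beval (pderiv q) x y = 0 \<and> cmod (beval q x y) < \<delta> \<longrightarrow> cmod x < r"
  shows "\<forall>c. 0 < cmod c \<and> cmod c < \<delta> \<longrightarrow>
     (\<forall>z \<in> {(x, y). beval q x y = c \<and> cmod x > r}.
        biholo_punctured_disc (connected_component_set {(x, y). beval q x y = c \<and> cmod x > r} z))"
proof (intro allI impI ballI)
  fix c z
  assume c: "0 < cmod c \<and> cmod c < \<delta>" and z: "z \<in> {(x, y). beval q x y = c \<and> cmod x > r}"
  define Qc where "Qc = q - bconst c"
  have set_eq: "{(x, y). beval q x y = c \<and> cmod x > r} = {(x, y). beval Qc x y = 0 \<and> cmod x > r}"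
    by (auto simp: Qc_def beval_diff)
  have pd: "pderiv Qc = pderiv q" by (simp add: Qc_def pderiv_diff pderiv_bconst)
  have cQ: "coeff Qc j = coeff q j" if "j > 0" for j using that by (simp add: Qc_def coeff_bconst)
  have simple: "beval (pderiv Qc) x y \<noteq> 0" if "cmod x > r" "beval Qc x y = 0" for x y
  proof
    assume "beval (pderiv Qc) x y = 0"
    moreover have "beval q x y = c" using that(2) by (simp add: Qc_def beval_diff)
    ultimately have "cmod x < r" using crit c pd by auto
    then show False using that(1) by simp
  qed
  have goal: "biholo_punctured_disc (connected_component_set {(x, y). beval Qc x y = 0 \<and> cmod x > r} z)"
    if deg: "degree Qc = N" and N1: "N \<ge> 1" and lc: "coeff Qc N = [:a:]" and a0: "a \<noteq> 0" for N a
  proof -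
    interpret curve Qc N a r
      by unfold_locales (use deg N1 lc a0 rpos simple in auto)
    show ?thesis using main_curve[of z] z set_eq unfolding S_def by simp
  qed
  from shape show "biholo_punctured_disc (connected_component_set {(x, y). beval q x y = c \<and> cmod x > r} z)"
  proof
    assume lin: "blinear q"
    note ls = lin_shape[OF lin]
    show ?thesis
    proof (cases "bcoeff q 0 1 = 0")
      case True
      have "coeff q j = 0" if "j > 0" for j
        using ls True that by (cases "j = 1") auto
      then have "degree q \<le> 0" by (intro degree_le) auto
      then have "degree q = 0" by simp
      then have "pderiv q = 0" by (simp add: pderiv_eq_0_iff)
      moreover obtain x y where "z = (x, y)" by (cases z)
      ultimately have "cmod x < r" "cmod x > r" using z crit c by auto
      then show ?thesis by simp
    next
      case False
      have "degree Qc = 1" by (rule degree_from_coeffs[of 1 Qc "bcoeff q 0 1"]) (use cQ ls False in auto)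
      moreover have "coeff Qc 1 = [:bcoeff q 0 1:]" using cQ ls by auto
      ultimately show ?thesis using goal[of 1 "bcoeff q 0 1"] False set_eq by simp
    qed
  next
    assume "\<exists>k l n :: nat. k \<ge> 2 \<and> l \<ge> 2 \<and> coprime k l \<and> n \<ge> 1 \<and>
          lqh_part_is k l q ((bX ^ k + bY ^ l) ^ n)"
    then obtain k l n :: nat where k: "k \<ge> 2" and l: "l \<ge> 2" and n: "n \<ge> 1"
      and lqh: "lqh_part_is k l q ((bX ^ k + bY ^ l) ^ n)" by blast
    note qs = qh_shape[OF k l lqh]
    have ln: "l * n \<ge> 1" using l n by (simp add: Suc_le_eq)
    have c1: "coeff Qc (l * n) = [:1:]" using qs(2) cQ ln by simp
    have "degree Qc = l * n" by (rule degree_from_coeffs[of "l * n" Qc 1]) (use cQ qs c1 ln in auto)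
    then show ?thesis using goal[of "l * n" 1] c1 ln set_eq by simp
  qed
qed


end
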